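(* Let $\mu>0$, $k>0$, $y(x)=-kx^2$, and let $x_p$, $m(x)$ and $N(x,\xi)$ be as in the context. Then $\partial_\xi N(x,\xi)<0$ for every $x\in(0,x_p)$ and every $\xi\in(0,1)$.
   Context: Let $g(u)=u^2(1-u)$ and $G(u)=u^3/3-u^4/4$ for $u\in[0,1]$. If $k^2\le\mu/6$ set $x_p=1$; otherwise let $x_p\in(0,1)$ be the unique $x\in(0,1)$ with $y(x)^2=2\mu G(x)$. For $x\in(0,x_p)$, $m(x)\in(0,x)$ is the unique number with $2\mu G(m(x))=2\mu G(x)-y(x)^2$; $m$ is $\mathcal{C}^1$. Define, for $x\in(0,x_p)$ and $\xi\in[0,1]$, writing $z=x-(x-m(x))\xi$, $$N(x,\xi)=(1-m'(x))\bigl(y(x)^2+2\mu(G(z)-G(x))\bigr)-(x-m(x))\Bigl(y(x)y'(x)+\mu\bigl(g(z)\,(1-(1-m'(x))\xi)-g(x)\bigr)\Bigr).$$ *)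

theory Defs
  imports "HOL-Analysis.Analysis"
begin

definition g :: "real \<Rightarrow> real" where
  "g u = u^2 * (1 - u)"

definition G :: "real \<Rightarrow> real" where
  "G u = u^3 / 3 - u^4 / 4"

definition yk :: "real \<Rightarrow> real \<Rightarrow> real" where
  "yk k x = - k * x^2"

definition xp :: "real \<Rightarrow> real \<Rightarrow> real" where
  "xp \<mu> k = (if k^2 \<le> \<mu> / 6 then 1
     else (THE x. 0 < x \<and> x < 1 \<and> (yk k x)^2 = 2 * \<mu> * G x))"

definition mfun :: "real \<Rightarrow> real \<Rightarrow> real \<Rightarrow> real" where
  "mfun \<mu> k x = (THE m. 0 < m \<and> m < x \<and>
      2 * \<mu> * G m = 2 * \<mu> * G x - (yk k x)^2)"

definition Nfun :: "real \<Rightarrow> real \<Rightarrow> real \<Rightarrow> real \<Rightarrow> real" where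
  "Nfun \<mu> k x \<xi> =
    (let m = mfun \<mu> k x; m' = deriv (mfun \<mu> k) x;
         y = yk k x; y' = deriv (yk k) x;
         z = x - (x - m) * \<xi>
     in (1 - m') * (y^2 + 2 * \<mu> * (G z - G x))
        - (x - m) * (y * y' + \<mu> * (g z * (1 - (1 - m') * \<xi>) - g x)))"

end

theory Submission
  imports Defs
begin


lemma U_neg:
  fixes m z x :: real
  assumes "0 < m" "m < z" "z < x" "x < 1"
  shows "z - 2*z^2 - 2*x + 3*x*z < 0"
proof -
  have e: "z - 2*z^2 - 2*x + 3*x*z = z^2 - z + (x-z)*(3*z-2)" by (simp add: algebra_simps power2_eq_square)
  show ?thesis
  proof (cases "3*z - 2 \<le> 0")
    case True
    then have "(x-z)*(3*z-2) \<le> 0" using assms by (simp add: mult_nonneg_nonpos)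
    moreover have "z^2 - z < 0" using assms by (simp add: power2_eq_square)
    ultimately show ?thesis using e by linarith
  next
    case False
    then have "(x-z)*(3*z-2) < (1-z)*(3*z-2)" using assms by (intro mult_strict_right_mono) auto
    moreover have "z^2 - z + (1-z)*(3*z-2) = -2*(1-z)^2" by (simp add: algebra_simps power2_eq_square)
    moreover have "-2*(1-z)^2 \<le> 0" by simp
    ultimately show ?thesis using e by linarith
  qed
qed

lemma W_neg:
  fixes m z x :: real
  assumes "0 < m" "m < z" "z < x" "x < 1"
  shows "x*(3*z-2) + (2-m)*z*(1-2*z) < 0"
proof -
  have e: "x*(3*z-2) + (2-m)*z*(1-2*z) = z*(-z - m + 2*m*z) + (x-z)*(3*z-2)"
    by (simp add: algebra_simps power2_eq_square)
  have a: "-z - m + 2*m*z < 0"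
  proof (cases "2*z - 1 \<le> 0")
    case True
    then have "m*(2*z-1) \<le> 0" using assms by (simp add: mult_nonneg_nonpos)
    then have "m*(2*z) \<le> m" by (simp add: algebra_simps)
    then show ?thesis using assms by linarith
  next
    case False
    then have "m*(2*z-1) < 1*(2*z-1)" using assms by (intro mult_strict_right_mono) auto
    then show ?thesis using assms by (simp add: algebra_simps)
  qed
  have a2: "z*(-z - m + 2*m*z) < 0" using a assms by (simp add: mult_pos_neg)
  have b: "3*z - 2 + (2-m)*z*(1-2*z) < 0"
  proof (cases "1 - 2*z \<ge> 0")
    case True
    have "(2-m)*(z*(1-2*z)) \<le> 2*(z*(1-2*z))"
      using True assms by (intro mult_right_mono) auto
    moreover have "3*z - 2 + 2*(z*(1-2*z)) < 0"
    proof -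
      have "3*z - 2 + 2*(z*(1-2*z)) = -4*(z - 5/8)^2 - 7/16" by (simp add: algebra_simps power2_eq_square)
      then show ?thesis using zero_le_power2[of "z - 5/8"] by linarith
    qed
    ultimately show ?thesis by (simp add: algebra_simps)
  next
    case False
    have "(2-z)*(z*(1-2*z)) \<ge> (2-m)*(z*(1-2*z))"
      using False assms by (intro mult_right_mono_neg) (auto intro!: mult_nonneg_nonpos)
    moreover have "3*z - 2 + (2-z)*(z*(1-2*z)) = (z-1)*(2*z^2 - 3*z + 2)"
      by (simp add: algebra_simps power2_eq_square power3_eq_cube)
    moreover have "2*z^2 - 3*z + 2 > 0"
    proof -
      have "2*z^2 - 3*z + 2 = 2*(z - 3/4)^2 + 7/8" by (simp add: algebra_simps power2_eq_square)
      then show ?thesis using zero_le_power2[of "z - 3/4"] by linarith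
    qed
    moreover have "z - 1 < 0" using assms by simp
    ultimately have "3*z - 2 + (2-z)*(z*(1-2*z)) < 0" by (simp add: mult_neg_pos)
    with \<open>(2-z)*(z*(1-2*z)) \<ge> _\<close> show ?thesis by (simp add: algebra_simps)
  qed
  show ?thesis
  proof (cases "3*z - 2 \<le> 0")
    case True
    then have "(x-z)*(3*z-2) \<le> 0" using assms by (simp add: mult_nonneg_nonpos)
    then show ?thesis using e a2 by linarith
  next
    case False
    then have "(x-z)*(3*z-2) < (1-z)*(3*z-2)" using assms by (intro mult_strict_right_mono) auto
    moreover have "z*(-z - m + 2*m*z) + (1-z)*(3*z-2) = 3*z - 2 + (2-m)*z*(1-2*z)"
      by (simp add: algebra_simps power2_eq_square)
    ultimately show ?thesis using e b by (smt (verit))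
  qed
qed

lemma Q_neg:
  fixes m z x :: real
  assumes "0 < m" "m < z" "z < x" "x < 1"
  shows "(x^2+x*m+4*m^2-3*m^3)*z*(1-2*z) - x*(x^2+x*m+m^2)*(2-3*z) < 0"
proof -
  define T where "T = x^2 + x*m"
  define U where "U = z - 2*z^2 - 2*x + 3*x*z"
  define V where "V = (4-3*m)*z*(1-2*z) - x*(2-3*z)"
  have e: "(x^2+x*m+4*m^2-3*m^3)*z*(1-2*z) - x*(x^2+x*m+m^2)*(2-3*z) = T*U + m^2*V"
    unfolding T_def U_def V_def by (simp add: algebra_simps power2_eq_square power3_eq_cube)
  have U: "U < 0" unfolding U_def using U_neg[OF assms] .
  have W: "2*U + V < 0"
  proof -
    have "2*U + V = 3*(x*(3*z-2) + (2-m)*z*(1-2*z))" unfolding U_def V_def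
      by (simp add: algebra_simps power2_eq_square)
    moreover define w where "w = x*(3*z-2) + (2-m)*z*(1-2*z)"
    ultimately show ?thesis using W_neg[OF assms] by simp
  qed
  have Tpos: "T > 0" unfolding T_def using assms by (simp add: add_pos_pos)
  have Tm: "2*m^2 < T" unfolding T_def using assms
    by (smt (verit) mult_strict_left_mono mult_strict_right_mono power2_eq_square)
  have TU: "T*U < 0" using Tpos U by (simp add: mult_pos_neg)
  show ?thesis
  proof (cases "V \<le> 0")
    case True
    then have "m^2*V \<le> 0" by (simp add: mult_nonneg_nonpos)
    then show ?thesis using e TU by linarith
  next
    case False
    then have "m^2*V \<le> (T/2)*V" using Tm by (intro mult_right_mono) auto
    moreover have "T*U + (T/2)*V = (T/2)*(2*U+V)" by (simp add: algebra_simps)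
    moreover have "(T/2)*(2*U+V) < 0" using Tpos W by (simp add: mult_pos_neg)
    ultimately show ?thesis using e by linarith
  qed
qed



lemma polyid:
  fixes x m \<xi> \<mu> mp :: real
  defines "d \<equiv> x - m" and "z \<equiv> x - (x - m)*\<xi>"
  shows "(3*x*m^2*(1-m)) * (- \<mu>*d*g z + \<mu>*d^2*(2*z-3*z^2)*(1-\<xi>))
       + (4*m^3-3*m^4-x^3) * (\<mu>*d*g z + \<mu>*d^2*(2*z-3*z^2)*\<xi>)
     = \<mu>*d*z*(x-m)*((x^2+x*m+4*m^2-3*m^3)*z*(1-2*z) - x*(x^2+x*m+m^2)*(2-3*z))"
  unfolding d_def z_def g_def by algebra



lemma G_deriv: "(G has_real_derivative g u) (at u)"
  unfolding G_def g_def
  by (rule derivative_eq_intros refl | simp)+ (simp add: algebra_simps power2_eq_square power3_eq_cube)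

lemma G_cont: "continuous_on S G"
  unfolding G_def by (intro continuous_intros) auto

lemma G_strict:
  assumes "0 \<le> a" "a < b" "b \<le> 1" shows "G a < G b"
proof (rule DERIV_pos_imp_increasing_open[OF assms(2)])
  fix t assume "a < t" "t < b"
  then have "g t > 0" using assms unfolding g_def by simp
  then show "\<exists>y. (G has_real_derivative y) (at t) \<and> y > 0" using G_deriv by blast
qed (rule G_cont)

lemma G_inj: assumes "0 \<le> u" "u \<le> 1" "0 \<le> v" "v \<le> 1" "G u = G v" shows "u = v"
  using G_strict[of u v] G_strict[of v u] assms by (cases u v rule: linorder_cases) auto

definition hinv :: "real \<Rightarrow> real" where
  "hinv s = (THE u. 0 < u \<and> u < 1 \<and> G u = s)"

lemma hinv_G: assumes "0 < u" "u < 1" shows "hinv (G u) = u"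
  unfolding hinv_def
  by (rule the_equality) (use assms G_inj in auto)

lemma G_hinv: assumes "0 < s" "s < 1/12"
  shows "0 < hinv s \<and> hinv s < 1 \<and> G (hinv s) = s"
proof -
  have "G 0 \<le> s" "s \<le> G 1" using assms by (auto simp: G_def)
  then obtain u where u: "0 \<le> u" "u \<le> 1" "G u = s"
    using IVT'[of G 0 s 1] G_cont by auto
  have "u \<noteq> 0" using u assms by (auto simp: G_def)
  moreover have "u \<noteq> 1" using u assms by (auto simp: G_def)
  ultimately have "0 < u" "u < 1" using u by auto
  then show ?thesis using hinv_G u by auto
qed

lemma xp_bound:
  fixes \<mu> k x :: real
  assumes "\<mu> > 0" "k > 0" "0 < x" "x < xp \<mu> k"
  shows "x < 1 \<and> x * (3*\<mu> + 6*k^2) < 4*\<mu>"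
proof (cases "k^2 \<le> \<mu>/6")
  case True
  then have "x < 1" using assms by (simp add: xp_def)
  then have "x * (3*\<mu> + 6*k^2) < 1 * (3*\<mu> + 6*k^2)"
    using assms by (intro mult_strict_right_mono) (auto intro: add_pos_nonneg)
  then show ?thesis using True \<open>x < 1\<close> by simp
next
  case False
  define x0 where "x0 = 4*\<mu> / (3*\<mu> + 6*k^2)"
  have den: "3*\<mu> + 6*k^2 > 0" using assms by (simp add: add_pos_nonneg)
  have eq: "(yk k y)^2 = 2*\<mu>*G y \<longleftrightarrow> y^3 * (y*(3*\<mu> + 6*k^2) - 4*\<mu>) = 0" for y
  proof -
    have "(yk k y)^2 - 2*\<mu>*G y = (y^3 * (y*(3*\<mu> + 6*k^2) - 4*\<mu>))/6"
      unfolding yk_def G_def by (simp add: algebra_simps power2_eq_square power3_eq_cube power4_eq_xxxx)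
    then show ?thesis by auto
  qed
  have x0pos: "0 < x0" unfolding x0_def using den assms by simp
  have x0lt: "x0 < 1" unfolding x0_def using den False by (simp add: field_simps)
  have x0eq: "x0 * (3*\<mu> + 6*k^2) = 4*\<mu>" unfolding x0_def using den by simp
  have "xp \<mu> k = x0"
    unfolding xp_def using False
  proof (simp, intro the_equality)
    show "0 < x0 \<and> x0 < 1 \<and> (yk k x0)^2 = 2*\<mu>*G x0" using x0pos x0lt x0eq eq by simp
  next
    fix y assume "0 < y \<and> y < 1 \<and> (yk k y)^2 = 2*\<mu>*G y"
    then have "y > 0" "y * (3*\<mu> + 6*k^2) = 4*\<mu>" using eq by auto
    then show "y = x0" unfolding x0_def using den by (simp add: field_simps)
  qed
  then have "x < x0" using assms by simp
  then have "x * (3*\<mu> + 6*k^2) < x0 * (3*\<mu> + 6*k^2)" using den by simp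
  then show ?thesis using x0eq x0lt \<open>x < x0\<close> by simp
qed

definition Tf :: "real \<Rightarrow> real \<Rightarrow> real \<Rightarrow> real" where
  "Tf \<mu> k x = G x - k^2 * x^4 / (2*\<mu>)"

lemma Tf_bounds:
  fixes \<mu> k x :: real
  assumes "\<mu> > 0" "k > 0" "0 < x" "x < xp \<mu> k"
  shows "0 < Tf \<mu> k x \<and> Tf \<mu> k x < G x \<and> G x < 1/12"
proof -
  have b: "x < 1" "x * (3*\<mu> + 6*k^2) < 4*\<mu>" using xp_bound[OF assms] by auto
  have "Tf \<mu> k x = x^3 * (4*\<mu> - x * (3*\<mu> + 6*k^2)) / (12*\<mu>)"
    unfolding Tf_def G_def using assms by (simp add: field_simps power2_eq_square power3_eq_cube power4_eq_xxxx)
  moreover have "x^3 * (4*\<mu> - x * (3*\<mu> + 6*k^2)) > 0" using b assms by simp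
  ultimately have "0 < Tf \<mu> k x" using assms by simp
  moreover have "k^2 * x^4 / (2*\<mu>) > 0" using assms by simp
  moreover have "G x < G 1" using G_strict[of x 1] assms b by simp
  ultimately show ?thesis unfolding Tf_def by (simp add: G_def)
qed

lemma mfun_eq:
  fixes \<mu> k x :: real
  assumes "\<mu> > 0" "k > 0" "0 < x" "x < xp \<mu> k"
  shows "mfun \<mu> k x = hinv (Tf \<mu> k x) \<and> 0 < mfun \<mu> k x \<and> mfun \<mu> k x < x
     \<and> G (mfun \<mu> k x) = Tf \<mu> k x"
proof -
  have b: "x < 1" using xp_bound[OF assms] by auto
  note T = Tf_bounds[OF assms]
  define u where "u = hinv (Tf \<mu> k x)"
  have u: "0 < u" "u < 1" "G u = Tf \<mu> k x" using G_hinv[of "Tf \<mu> k x"] T unfolding u_def by auto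
  have ux: "u < x"
  proof (rule ccontr)
    assume "\<not> u < x"
    then have "G x \<le> G u" using G_strict[of x u] u assms by (cases "x = u") auto
    then show False using u T by simp
  qed
  have yk2: "(yk k x)^2 = k^2 * x^4" unfolding yk_def by (simp add: power_mult_distrib)
  have "mfun \<mu> k x = u"
    unfolding mfun_def
  proof (rule the_equality)
    show "0 < u \<and> u < x \<and> 2 * \<mu> * G u = 2 * \<mu> * G x - (yk k x)^2"
      using u ux assms yk2 unfolding Tf_def by (simp add: field_simps)
  next
    fix v assume v: "0 < v \<and> v < x \<and> 2 * \<mu> * G v = 2 * \<mu> * G x - (yk k x)^2"
    then have "G v = Tf \<mu> k x" using assms yk2 unfolding Tf_def by (simp add: field_simps)
    then show "v = u" using G_inj[of v u] u v b by auto
  qed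
  then show ?thesis using u ux u_def by auto
qed

lemma mfun_deriv:
  fixes \<mu> k x :: real
  assumes "\<mu> > 0" "k > 0" "0 < x" "x < xp \<mu> k"
  shows "deriv (mfun \<mu> k) x = (g x - 2*k^2*x^3/\<mu>) / g (mfun \<mu> k x)"
proof -
  define s0 where "s0 = Tf \<mu> k x"
  define u0 where "u0 = hinv s0"
  note T = Tf_bounds[OF assms]
  have u0: "0 < u0" "u0 < 1" "G u0 = s0" using G_hinv[of s0] T unfolding u0_def s0_def by auto
  have m: "mfun \<mu> k x = u0" using mfun_eq[OF assms] unfolding u0_def s0_def by simp
  have gu0: "g u0 > 0" using u0 unfolding g_def by simp
  have cont: "isCont hinv s0"
  proof -
    have "isCont hinv (G u0)"
      by (rule isCont_inverse_function2[of "u0/2" u0 "(1+u0)/2"])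
         (use u0 hinv_G G_deriv[THEN DERIV_isCont] in auto)
    then show ?thesis using u0 by simp
  qed
  have dh: "(hinv has_real_derivative inverse (g u0)) (at s0)"
  proof (rule DERIV_inverse_function[where f=G and a=0 and b="1/12"])
    show "(G has_real_derivative g u0) (at (hinv s0))" using G_deriv u0_def by simp
    show "g u0 \<noteq> 0" using gu0 by simp
    show "0 < s0" "s0 < 1/12" using T unfolding s0_def by auto
    show "\<And>y. 0 < y \<Longrightarrow> y < 1/12 \<Longrightarrow> G (hinv y) = y" using G_hinv by auto
  qed (rule cont)
  have p4: "((\<lambda>t. t^4) has_real_derivative 4*x^3) (at x)"
    using DERIV_pow[of 4 x] by simp
  have d4: "((\<lambda>t. k^2*t^4/(2*\<mu>)) has_real_derivative k^2*(4*x^3)/(2*\<mu>)) (at x)"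
    by (intro DERIV_cdivide DERIV_cmult p4)
  have dT0: "((\<lambda>t. G t - k^2*t^4/(2*\<mu>)) has_real_derivative (g x - k^2*(4*x^3)/(2*\<mu>))) (at x)"
    by (intro DERIV_diff G_deriv d4)
  have dT: "(Tf \<mu> k has_real_derivative (g x - 2*k^2*x^3/\<mu>)) (at x)"
    using dT0 assms unfolding Tf_def by (simp add: field_simps)
  have dc: "((\<lambda>t. hinv (Tf \<mu> k t)) has_real_derivative inverse (g u0) * (g x - 2*k^2*x^3/\<mu>)) (at x)"
    using DERIV_chain2[OF dh[unfolded s0_def] dT] .
  have "(mfun \<mu> k has_real_derivative inverse (g u0) * (g x - 2*k^2*x^3/\<mu>)) (at x)"
  proof (rule has_field_derivative_transform_within_open[OF dc, where S="{0<..<xp \<mu> k}"])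
    show "x \<in> {0<..<xp \<mu> k}" using assms by simp
    fix t assume "t \<in> {0<..<xp \<mu> k}"
    then show "hinv (Tf \<mu> k t) = mfun \<mu> k t" using mfun_eq[OF assms(1,2), of t] by auto
  qed simp
  then show ?thesis using m DERIV_imp_deriv by (simp add: field_simps)
qed



theorem lemmaA1:
  fixes \<mu> k x \<xi> :: real
  assumes "\<mu> > 0" and "k > 0"
    and "0 < x" and "x < xp \<mu> k"
    and "0 < \<xi>" and "\<xi> < 1"
  shows "\<exists>D. ((\<lambda>t. Nfun \<mu> k x t) has_real_derivative D) (at \<xi>) \<and> D < 0"
proof -
  define m where "m = mfun \<mu> k x"
  define mp where "mp = deriv (mfun \<mu> k) x"
  define y where "y = yk k x"
  define y' where "y' = deriv (yk k) x"
  define d where "d = x - m"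
  define z where "z = x - d*\<xi>"
  have x1: "x < 1" using xp_bound[OF assms(1-4)] by auto
  have mf: "0 < m" "m < x" "G m = Tf \<mu> k x" using mfun_eq[OF assms(1-4)] unfolding m_def by auto
  have mpv: "mp = (g x - 2*k^2*x^3/\<mu>) / g m" using mfun_deriv[OF assms(1-4)] unfolding mp_def m_def .
  have Nf: "Nfun \<mu> k x t = (1 - mp) * (y^2 + 2*\<mu>*(G (x - d*t) - G x))
        - d * (y*y' + \<mu>*(g (x - d*t) * (1 - (1 - mp)*t) - g x))" for t
    unfolding Nfun_def Let_def m_def mp_def y_def y'_def d_def by simp
  define D where "D = - \<mu>*d*g z + \<mu>*d^2*(2*z-3*z^2)*(1-\<xi>) + mp * (\<mu>*d*g z + \<mu>*d^2*(2*z-3*z^2)*\<xi>)"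
  have "((\<lambda>t. Nfun \<mu> k x t) has_real_derivative D) (at \<xi>)"
    unfolding Nf G_def g_def
    apply (auto intro!: derivative_eq_intros)
    unfolding D_def z_def g_def by algebra
  moreover have "D < 0"
  proof -
    define K where "K = 3*x*m^2*(1-m)"
    have Kpos: "K > 0" unfolding K_def using mf x1 by simp
    have gm: "g m = m^2*(1-m)" unfolding g_def by simp
    have gmpos: "g m > 0" using gm mf x1 by simp
    have k2: "k^2*x^4 = 2*\<mu>*(G x - G m)" using mf(3) assms(1) unfolding Tf_def by (simp add: field_simps)
    have "K*mp = 3*x*(g x - 2*k^2*x^3/\<mu>)" unfolding K_def mpv gm using mf x1 assms(1) by (simp add: field_simps)
    also have "\<dots> = 3*x*g x - 6*(k^2*x^4)/\<mu>" using assms(1) by (simp add: field_simps power2_eq_square power3_eq_cube power4_eq_xxxx)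
    also have "\<dots> = 4*m^3-3*m^4-x^3" unfolding k2 using assms(1) by (simp add: G_def g_def field_simps power2_eq_square power3_eq_cube power4_eq_xxxx)
    finally have Kmp: "K*mp = 4*m^3-3*m^4-x^3" .
    define Q where "Q = (x^2+x*m+4*m^2-3*m^3)*z*(1-2*z) - x*(x^2+x*m+m^2)*(2-3*z)"
    have "K*D = K * (- \<mu>*d*g z + \<mu>*d^2*(2*z-3*z^2)*(1-\<xi>)) + (K*mp) * (\<mu>*d*g z + \<mu>*d^2*(2*z-3*z^2)*\<xi>)"
      unfolding D_def by (simp add: algebra_simps)
    also have "\<dots> = K * (- \<mu>*d*g z + \<mu>*d^2*(2*z-3*z^2)*(1-\<xi>)) + (4*m^3-3*m^4-x^3) * (\<mu>*d*g z + \<mu>*d^2*(2*z-3*z^2)*\<xi>)"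
      by (simp only: Kmp)
    also have "\<dots> = \<mu>*d*z*(x-m)*Q" unfolding K_def Q_def using polyid[of x m \<mu> \<xi>]
      unfolding d_def z_def by simp
    finally have KD: "K*D = \<mu>*d*z*(x-m)*Q" .
    have zb: "m < z" "z < x"
    proof -
      have "d*\<xi> < d*1" "0 < d*\<xi>" using assms(5,6) mf unfolding d_def by auto
      then show "m < z" "z < x" unfolding z_def d_def by auto
    qed
    have "Q < 0" unfolding Q_def using Q_neg[of m z x] mf zb x1 by simp
    moreover have "\<mu>*d*z*(x-m) > 0" using assms(1) mf zb unfolding d_def by simp
    ultimately have "K*D < 0" unfolding KD by (simp add: mult_pos_neg)
    then show ?thesis using Kpos by (simp add: mult_less_0_iff)
  qed
  ultimately show ?thesis by blast
qed


end
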